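(* For every integer $n\ge2$, \[ \log g(n)\le \theta\big(P^{+}(g(n))\big)+S(q), \] where $q$ is the prime following $P^{+}(g(n))$ and $S(q)=\sum_{2\le\alpha\le \log(2q)/\log2}\theta(q^{1/\alpha}+1)$ (sum over integers $\alpha$).
   Context: $g(n)$ is the maximal order of an element of $\mathfrak S_n$, i.e. $g(n)=\max\{M\ge1:\ell(M)\le n\}$ with $\ell$ additive, $\ell(1)=0$, $\ell(p^a)=p^a$; $P^{+}(M)$ is the largest prime factor of $M$. $\theta(x)=\sum_{p\le x}\log p$. *)

theory Defs
  imports "HOL-Computational_Algebra.Primes" Complex_Main
begin

definition ell :: "nat \<Rightarrow> nat" where
  "ell M = (\<Sum>p\<in>prime_factors M. p ^ multiplicity p M)"

text \<open>Landau's function: maximal order of an element of S_n.\<close>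
definition landau_g :: "nat \<Rightarrow> nat" where
  "landau_g n = Max {M. M \<ge> 1 \<and> ell M \<le> n}"

definition Pplus :: "nat \<Rightarrow> nat" where
  "Pplus M = Max (prime_factors M)"

definition cheb_theta :: "real \<Rightarrow> real" where
  "cheb_theta x = (\<Sum>p\<in>{p::nat. prime p \<and> real p \<le> x}. ln (real p))"

definition next_prime :: "nat \<Rightarrow> nat" where
  "next_prime m = (LEAST q. prime q \<and> q > m)"

definition S_sum :: "nat \<Rightarrow> real" where
  "S_sum q = (\<Sum>\<alpha>\<in>{\<alpha>::nat. 2 \<le> \<alpha> \<and> real \<alpha> \<le> ln (2 * real q) / ln 2}.
                cheb_theta (real q powr (1 / real \<alpha>) + 1))"

end

theory Submission
  imports Defs
begin

lemma ell_superset: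
  fixes M :: nat
  assumes "finite S" "\<forall>p\<in>S. prime p" "prime_factors M \<subseteq> S"
  shows "ell M = (\<Sum>p\<in>S. if multiplicity p M = 0 then 0 else p ^ multiplicity p M)"
proof -
  have "ell M = (\<Sum>p\<in>S. if p \<in> prime_factors M then p ^ multiplicity p M else 0)"
    unfolding ell_def using assms(1,3)
    by (simp add: sum.If_cases Int_absorb1 Int_commute)
  also have "\<dots> = (\<Sum>p\<in>S. if multiplicity p M = 0 then 0 else p ^ multiplicity p M)"
    by (rule sum.cong) (use assms(2) in \<open>auto simp: prime_factors_multiplicity\<close>)
  finally show ?thesis .
qed

lemma le_two_pow_ell:
  fixes M :: nat
  assumes "M \<ge> 1"
  shows "M \<le> 2 ^ ell M"
proof -
  have "M = (\<Prod>p\<in>prime_factors M. p ^ multiplicity p M)"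
    using prod_prime_factors[of M] assms by simp
  also have "\<dots> \<le> (\<Prod>p\<in>prime_factors M. 2 ^ (p ^ multiplicity p M))"
    by (rule prod_mono) (auto intro: less_imp_le less_exp)
  also have "\<dots> = 2 ^ ell M" unfolding ell_def by (simp add: power_sum)
  finally show ?thesis .
qed

lemma landau_basic:
  assumes "n \<ge> 2"
  shows "finite {M. M \<ge> 1 \<and> ell M \<le> n}" "landau_g n \<ge> 2" "ell (landau_g n) \<le> n"
    "\<And>M. M \<ge> 1 \<Longrightarrow> ell M \<le> n \<Longrightarrow> M \<le> landau_g n"
proof -
  have fin: "finite {M. M \<ge> 1 \<and> ell M \<le> n}"
  proof (rule finite_subset)
    show "{M. M \<ge> 1 \<and> ell M \<le> n} \<subseteq> {..(2::nat)^n}"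
    proof
      fix M assume "M \<in> {M. M \<ge> 1 \<and> ell M \<le> n}"
      hence "M \<ge> 1" "ell M \<le> n" by auto
      hence "M \<le> 2 ^ ell M" using le_two_pow_ell by blast
      also have "\<dots> \<le> 2 ^ n" using \<open>ell M \<le> n\<close> by (simp add: power_increasing)
      finally show "M \<in> {..2^n}" by simp
    qed
  qed simp
  thus "finite {M. M \<ge> 1 \<and> ell M \<le> n}" .
  have e2: "ell 2 = 2" unfolding ell_def by (simp add: prime_prime_factors)
  have mem2: "2 \<in> {M. M \<ge> 1 \<and> ell M \<le> n}" using e2 assms by simp
  hence ne: "{M. M \<ge> 1 \<and> ell M \<le> n} \<noteq> {}" by blast
  have "landau_g n \<in> {M. M \<ge> 1 \<and> ell M \<le> n}"
    unfolding landau_g_def using Max_in[OF fin ne] .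
  thus "ell (landau_g n) \<le> n" by simp
  show "2 \<le> landau_g n" unfolding landau_g_def using Max_ge[OF fin mem2] .
  show "\<And>M. M \<ge> 1 \<Longrightarrow> ell M \<le> n \<Longrightarrow> M \<le> landau_g n"
    unfolding landau_g_def using Max_ge[OF fin] by simp
qed

lemma key:
  assumes n2: "n \<ge> 2" and N: "N = landau_g n" and p: "p \<in> prime_factors N"
    and a: "a = multiplicity p N" "a \<ge> 2"
    and q: "prime q" "q > p" "q \<notin> prime_factors N"
  shows "p ^ (a - 1) * (p - 1) < q"
proof -
  note lb = landau_basic[OF n2, folded N]
  have N0: "N \<noteq> 0" using lb(2) by simp
  have pp: "prime p" using p by auto
  have "p dvd N" using p by auto
  then obtain m where m: "N = p * m" by blast
  have m0: "m \<noteq> 0" using N0 m by auto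
  have qN: "multiplicity q N = 0" using q N0 by (simp add: prime_factors_multiplicity)
  define N' where "N' = m * q"
  have N'0: "N' \<noteq> 0" using m0 q by (auto simp: N'_def)
  have mN: "\<And>r. prime r \<Longrightarrow> multiplicity r N = multiplicity r p + multiplicity r m"
    using m m0 pp by (simp add: prime_elem_multiplicity_mult_distrib)
  have mN': "\<And>r. prime r \<Longrightarrow> multiplicity r N' = multiplicity r m + multiplicity r q"
    using m0 q unfolding N'_def by (simp add: prime_elem_multiplicity_mult_distrib)
  define S where "S = insert q (prime_factors N)"
  have finS: "finite S" and primeS: "\<forall>r\<in>S. prime r" using q by (auto simp: S_def)
  have sub1: "prime_factors N \<subseteq> S" by (auto simp: S_def)
  have sub2: "prime_factors N' \<subseteq> S"
  proof
    fix r assume r: "r \<in> prime_factors N'"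
    hence rp: "prime r" and "r dvd m * q" by (auto simp: N'_def)
    hence "r dvd m \<or> r dvd q" using prime_dvd_mult_iff by blast
    thus "r \<in> S"
    proof
      assume "r dvd m" hence "r dvd N" using m by simp
      thus ?thesis using rp N0 by (auto simp: S_def prime_factorsI)
    next
      assume "r dvd q" hence "r = q" using rp q primes_dvd_imp_eq by blast
      thus ?thesis by (simp add: S_def)
    qed
  qed
  define f where "f = (\<lambda>M r. if multiplicity r M = 0 then 0 else r ^ multiplicity r (M::nat))"
  have eN: "ell N = (\<Sum>r\<in>S. f N r)" unfolding f_def by (rule ell_superset[OF finS primeS sub1])
  have eN': "ell N' = (\<Sum>r\<in>S. f N' r)" unfolding f_def by (rule ell_superset[OF finS primeS sub2])
  have pS: "p \<in> S" "q \<in> S" "p \<noteq> q" using p q by (auto simp: S_def)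
  have split: "\<And>g::nat\<Rightarrow>nat. (\<Sum>r\<in>S. g r) = g q + g p + (\<Sum>r\<in>S - {q} - {p}. g r)"
    using finS pS by (simp add: sum.remove[of S q] sum.remove[of "S - {q}" p] add.assoc)
  have rest: "(\<Sum>r\<in>S - {q} - {p}. f N r) = (\<Sum>r\<in>S - {q} - {p}. f N' r)"
  proof (rule sum.cong)
    fix r assume r: "r \<in> S - {q} - {p}"
    hence rp: "prime r" using primeS by auto
    have "multiplicity r N = multiplicity r m" using mN[OF rp] prime_multiplicity_other[OF rp pp] r by simp
    moreover have "multiplicity r N' = multiplicity r m" using mN'[OF rp] prime_multiplicity_other[OF rp q(1)] r by simp
    ultimately show "f N r = f N' r" by (simp add: f_def)
  qed simp
  have mpm: "multiplicity p m = a - 1" using mN[OF pp] a pp by simp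
  have mqm: "multiplicity q m = 0" using mN[OF q(1)] qN by simp
  have fNq: "f N q = 0" using qN by (simp add: f_def)
  have fN'q: "f N' q = q" using mN'[OF q(1)] mqm q by (simp add: f_def)
  have fNp: "f N p = p ^ a" using a by (simp add: f_def)
  have fN'p: "f N' p = p ^ (a - 1)" using mN'[OF pp] mpm prime_multiplicity_other[OF pp q(1) pS(3)] a
    by (simp add: f_def)
  have ell_eq: "ell N + q + p ^ (a - 1) = ell N' + p ^ a"
  proof -
    have "ell N = q * 0 + p ^ a + (\<Sum>r\<in>S - {q} - {p}. f N r)" using eN split[of "f N"] fNq fNp by simp
    moreover have "ell N' = q + p ^ (a - 1) + (\<Sum>r\<in>S - {q} - {p}. f N r)" using eN' split[of "f N'"] fN'q fN'p rest by simp
    ultimately show ?thesis by simp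
  qed
  have "N < N'" using m m0 q by (simp add: N'_def mult.commute)
  hence "\<not> ell N' \<le> n" using lb(4)[of N'] N'0 by fastforce
  hence "ell N < ell N'" using lb(3) by simp
  hence lt: "p ^ a < q + p ^ (a - 1)" using ell_eq by simp
  have "p ^ a = p ^ (a - 1) * (p - 1) + p ^ (a - 1)"
  proof -
    have "p ^ a = p ^ (a - 1) * p" using a(2) by (cases a) (auto simp: mult.commute)
    also have "\<dots> = p ^ (a - 1) * (p - 1) + p ^ (a - 1)" using prime_gt_0_nat[OF pp]
      by (cases p) (simp_all add: algebra_simps)
    finally show ?thesis .
  qed
  thus ?thesis using lt by linarith
qed

lemma fin_primes_le: "finite {p::nat. prime p \<and> real p \<le> x}"
  by (rule finite_subset[of _ "{..nat \<lfloor>x\<rfloor>}"]) (auto intro: le_nat_floor)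

lemma theta_ge_subset:
  assumes "A \<subseteq> {p::nat. prime p \<and> real p \<le> x}"
  shows "(\<Sum>p\<in>A. ln (real p)) \<le> cheb_theta x"
  unfolding cheb_theta_def
  by (rule sum_mono2[OF fin_primes_le assms]) (auto dest: prime_gt_0_nat)

lemma bound_A:
  fixes p a q :: nat
  assumes "p ^ (a - 1) * (p - 1) < q" "2 \<le> \<alpha>" "\<alpha> \<le> a" "prime p"
  shows "real p \<le> real q powr (1 / real \<alpha>) + 1"
proof -
  have p2: "p \<ge> 2" using assms(4) prime_ge_2_nat by blast
  define x where "x = real p - 1"
  have x1: "x \<ge> 1" using p2 by (simp add: x_def)
  have "x ^ \<alpha> \<le> x ^ a" using x1 assms(3) by (simp add: power_increasing)
  also have "\<dots> = x ^ (a - 1) * x" using assms(2,3) by (cases a) (auto simp: mult.commute)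
  also have "\<dots> \<le> real p ^ (a - 1) * x" using x1 by (intro mult_right_mono power_mono) (auto simp: x_def)
  also have "\<dots> = real (p ^ (a - 1) * (p - 1))" using p2 by (simp add: x_def of_nat_diff)
  also have "\<dots> < real q" using assms(1) by linarith
  finally have xq: "x ^ \<alpha> < real q" .
  have "x = (x ^ \<alpha>) powr (1 / real \<alpha>)"
    using x1 assms(2) by (simp add: powr_realpow[symmetric] powr_powr)
  also have "\<dots> \<le> real q powr (1 / real \<alpha>)"
    using xq x1 by (intro powr_mono2) auto
  finally show ?thesis by (simp add: x_def)
qed

lemma bound_B:
  fixes p a q :: nat
  assumes "p ^ (a - 1) * (p - 1) < q" "2 \<le> a" "prime p"
  shows "real a \<le> ln (2 * real q) / ln 2"
proof -
  have p2: "p \<ge> 2" using assms(3) prime_ge_2_nat by blast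
  have "(2::nat) ^ (a - 1) \<le> p ^ (a - 1)" using p2 by (simp add: power_mono)
  also have "\<dots> \<le> p ^ (a - 1) * (p - 1)" using p2 by simp
  finally have "2 ^ (a - 1) < q" using assms(1) by linarith
  hence "(2::nat) ^ a < 2 * q" using assms(2) by (cases a) auto
  hence lt: "(2::real) ^ a < 2 * real q" by (metis of_nat_less_iff of_nat_mult of_nat_numeral of_nat_power)
  have e: "real a * ln 2 = ln ((2::real) ^ a)" by (simp add: ln_realpow)
  have "(0::real) < 2 ^ a" by simp
  hence q0: "(0::real) < 2 * real q" using lt by linarith
  have "ln ((2::real) ^ a) < ln (2 * real q)" using lt q0 by (intro ln_less_cancel_iff[THEN iffD2]) auto
  hence "real a * ln 2 < ln (2 * real q)" using e by simp
  thus ?thesis by (simp add: pos_le_divide_eq)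
qed

theorem mainTheorem17:
  fixes n :: nat
  assumes "n \<ge> 2"
  shows "ln (real (landau_g n)) \<le>
           cheb_theta (real (Pplus (landau_g n))) + S_sum (next_prime (Pplus (landau_g n)))"
proof -
  define N where "N = landau_g n"
  note lb = landau_basic[OF assms, folded N_def]
  have N0: "N \<noteq> 0" "N \<noteq> 1" using lb(2) by auto
  obtain p0 where "prime p0" "p0 dvd N" using prime_factor_nat[OF N0(2)] by blast
  hence "p0 \<in> prime_factors N" using N0 by (intro prime_factorsI) auto
  hence ne: "prime_factors N \<noteq> {}" by blast
  define P where "P = Pplus N"
  have PN: "\<And>p. p \<in> prime_factors N \<Longrightarrow> p \<le> P" unfolding P_def Pplus_def using ne by simp
  define q where "q = next_prime P"
  have qq: "prime q \<and> q > P" unfolding q_def next_prime_def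
    by (rule LeastI_ex) (use bigger_prime in blast)
  have qN: "q \<notin> prime_factors N" using qq PN[of q] by auto
  define c where "c = ln (2 * real q) / ln 2"
  define A where "A = {\<alpha>::nat. 2 \<le> \<alpha> \<and> real \<alpha> \<le> c}"
  have finA: "finite A" unfolding A_def
    by (rule finite_subset[of _ "{..nat \<lfloor>c\<rfloor>}"]) (auto intro: le_nat_floor)
  define mu where "mu = (\<lambda>p. multiplicity p N)"
  have keyN: "\<And>p. p \<in> prime_factors N \<Longrightarrow> 2 \<le> mu p \<Longrightarrow> p ^ (mu p - 1) * (p - 1) < q"
  proof -
    fix p assume p: "p \<in> prime_factors N" and m: "2 \<le> mu p"
    have "q > p" using PN[OF p] qq by linarith
    show "p ^ (mu p - 1) * (p - 1) < q"
      by (rule key[OF assms N_def p _ m _ \<open>q > p\<close> qN]) (use qq in \<open>simp_all add: mu_def\<close>)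
  qed
  have g: "\<And>p. p \<in> prime_factors N \<Longrightarrow>
     real (mu p) * ln (real p) = ln (real p) + (\<Sum>\<alpha>\<in>A. if \<alpha> \<le> mu p then ln (real p) else 0)"
  proof -
    fix p assume p: "p \<in> prime_factors N"
    have mu1: "mu p \<ge> 1" using p by (auto simp: mu_def prime_factors_multiplicity)
    have set: "{\<alpha>\<in>A. \<alpha> \<le> mu p} = {2..mu p}"
    proof (cases "mu p \<ge> 2")
      case True
      have "real (mu p) \<le> c" using bound_B[OF keyN[OF p True] True] p by (auto simp: c_def)
      thus ?thesis by (auto simp: A_def)
    next
      case False thus ?thesis by (auto simp: A_def)
    qed
    have "(\<Sum>\<alpha>\<in>A. if \<alpha> \<le> mu p then ln (real p) else 0) = (\<Sum>\<alpha>\<in>{\<alpha>\<in>A. \<alpha> \<le> mu p}. ln (real p))"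
      using finA by (simp only: sum.inter_filter)
    also have "\<dots> = real (mu p - 1) * ln (real p)" using set by simp
    finally show "real (mu p) * ln (real p) = ln (real p) + (\<Sum>\<alpha>\<in>A. if \<alpha> \<le> mu p then ln (real p) else 0)"
      using mu1 by (simp add: of_nat_diff algebra_simps)
  qed
  have "ln (real N) = ln (\<Prod>p\<in>prime_factors N. real p ^ mu p)"
  proof -
    have "real N = real (\<Prod>p\<in>prime_factors N. p ^ mu p)"
      using prod_prime_factors[of N] N0 by (simp add: mu_def)
    thus ?thesis by (simp add: of_nat_prod)
  qed
  also have "\<dots> = (\<Sum>p\<in>prime_factors N. real (mu p) * ln (real p))"
    by (subst ln_prod) (auto simp: ln_realpow dest!: in_prime_factors_imp_prime prime_gt_0_nat)
  also have "\<dots> = (\<Sum>p\<in>prime_factors N. ln (real p)) +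
      (\<Sum>\<alpha>\<in>A. \<Sum>p\<in>prime_factors N. if \<alpha> \<le> mu p then ln (real p) else 0)"
    by (simp add: g sum.distrib sum.swap[of _ _ A])
  also have "\<dots> \<le> cheb_theta (real P) + S_sum q"
  proof (rule add_mono)
    show "(\<Sum>p\<in>prime_factors N. ln (real p)) \<le> cheb_theta (real P)"
      by (rule theta_ge_subset) (auto dest: PN)
    show "(\<Sum>\<alpha>\<in>A. \<Sum>p\<in>prime_factors N. if \<alpha> \<le> mu p then ln (real p) else 0) \<le> S_sum q"
      unfolding S_sum_def c_def[symmetric] A_def[symmetric]
    proof (rule sum_mono)
      fix \<alpha> assume al: "\<alpha> \<in> A"
      have "(\<Sum>p\<in>prime_factors N. if \<alpha> \<le> mu p then ln (real p) else 0)
          = (\<Sum>p\<in>{p\<in>prime_factors N. \<alpha> \<le> mu p}. ln (real p))"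
        by (simp only: sum.inter_filter finite_set_mset)
      also have "\<dots> \<le> cheb_theta (real q powr (1 / real \<alpha>) + 1)"
      proof (rule theta_ge_subset, safe)
        fix p assume p: "p \<in> prime_factors N" "\<alpha> \<le> mu p"
        show "prime p" using p by auto
        have "2 \<le> mu p" using al p by (auto simp: A_def)
        show "real p \<le> real q powr (1 / real \<alpha>) + 1"
          by (rule bound_A[OF keyN[OF p(1) \<open>2 \<le> mu p\<close>]]) (use al p in \<open>auto simp: A_def\<close>)
      qed
      finally show "(\<Sum>p\<in>prime_factors N. if \<alpha> \<le> mu p then ln (real p) else 0)
          \<le> cheb_theta (real q powr (1 / real \<alpha>) + 1)" .
    qed
  qed
  finally show ?thesis unfolding N_def P_def q_def .
qed

end
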